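(* Let \(P\colon\mathbb{R}^n\to\mathbb{R}^n\) be a vector field, let \(\nu,\eta\colon\mathbb{R}_+\to\mathbb{R}\) be continuous functions and \(\varepsilon\in\mathbb{R}\) a constant, and consider the second order differential equation \[\ddot x+\nu(t)\dot x+\eta(t)P(x)=\varepsilon\,\frac{d}{dt}\big[\eta(t)P(x)\big].\] If \(P\) is conservative, \(P=\nabla f\) for some function \(f\colon\mathbb{R}^n\to\mathbb{R}\), then this equation is derived from the Lagrange–d'Alembert variational principle: it is the equation of motion (forced Euler–Lagrange equation \(\frac{d}{dt}\big(\frac{\partial L}{\partial \dot x^i}\big)-\frac{\partial L}{\partial x^i}=F_i\)) of the forced time-dependent Lagrangian system with \[L(x,\dot x,t)=a(t)\tfrac12\|\dot x\|^2-b(t)f(x),\qquad F(x,\dot x,t)=\varepsilon\,a(t)\frac{d}{dt}\Big[\frac{b(t)}{a(t)}P(x)\Big],\] where \(a(t)=\exp\big(\int_0^t\nu(s)\,ds\big)\) and \(b(t)=a(t)\eta(t)\) for \(t\ge0\).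
   Context: The Lagrange–d'Alembert principle for a time-dependent Lagrangian \(L\colon TQ\times\mathbb{R}\to\mathbb{R}\) and external force \(F\) seeks curves \(\sigma\) with fixed endpoints such that \(\delta\int_a^b L(\sigma'(t),t)\,dt+\int_a^b F(\sigma'(t),t)\,\delta\sigma(t)\,dt=0\) for all variations \(\delta\sigma\) vanishing at the endpoints; its solutions satisfy the forced Euler–Lagrange equations \(\frac{d}{dt}\big(\frac{\partial L}{\partial \dot x^i}\big)-\frac{\partial L}{\partial x^i}=F_i\). *)

theory Defs
  imports "HOL-Analysis.Analysis"
begin

text \<open>Configuration space R^n is modelled as real^'n. A time-dependent Lagrangian
  is a function L y v t of position y, velocity v and time t.\<close>

definition dL_dv :: "(real^'n \<Rightarrow> real^'n \<Rightarrow> real \<Rightarrow> real) \<Rightarrow> real^'n \<Rightarrow> real^'n \<Rightarrow> real \<Rightarrow> 'n \<Rightarrow> real" where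
  "dL_dv L y v t i = deriv (\<lambda>h. L y (v + h *\<^sub>R axis i 1) t) 0"

definition dL_dx :: "(real^'n \<Rightarrow> real^'n \<Rightarrow> real \<Rightarrow> real) \<Rightarrow> real^'n \<Rightarrow> real^'n \<Rightarrow> real \<Rightarrow> 'n \<Rightarrow> real" where
  "dL_dx L y v t i = deriv (\<lambda>h. L (y + h *\<^sub>R axis i 1) v t) 0"

text \<open>Forced Euler--Lagrange equation at time t along the curve sigma, where Fs t is
  the external force evaluated along the curve at time t:
  d/dt (dL/dv^i) - dL/dx^i = F_i for every coordinate i.\<close>
definition forced_EL :: "(real^'n \<Rightarrow> real^'n \<Rightarrow> real \<Rightarrow> real) \<Rightarrow> (real \<Rightarrow> real^'n) \<Rightarrow> (real \<Rightarrow> real^'n) \<Rightarrow> real \<Rightarrow> bool" where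
  "forced_EL L Fs \<sigma> t \<longleftrightarrow>
     (\<forall>i. ((\<lambda>s. dL_dv L (\<sigma> s) (vector_derivative \<sigma> (at s)) s i) has_real_derivative
            (dL_dx L (\<sigma> t) (vector_derivative \<sigma> (at t)) t i + Fs t $ i)) (at t))"

end

theory Submission imports Defs begin
lemma norm_sq_axis: fixes v :: "real^'n"
  shows "(norm (v + h *\<^sub>R axis i 1))\<^sup>2 = (norm v)\<^sup>2 + 2*h*(v$i) + h\<^sup>2"
  unfolding power2_norm_eq_inner
  by (simp add: inner_add_left inner_add_right inner_axis inner_axis' inner_commute algebra_simps power2_eq_square)

lemma dLv: "dL_dv (\<lambda>y v s. a s * ((1/2) * (norm v)\<^sup>2) - b s * f y) y v s i = a s * v$i"
  unfolding dL_dv_def norm_sq_axis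
  by (rule DERIV_imp_deriv) (auto intro!: derivative_eq_intros)

lemma dLx: assumes "GDERIV f y :> P y"
  shows "dL_dx (\<lambda>y v s. a s * ((1/2) * (norm v)\<^sup>2) - b s * f y) y v s i = - b s * P y $ i"
proof -
  have "((\<lambda>h. y + h *\<^sub>R axis i 1) has_derivative (\<lambda>h. h *\<^sub>R axis i 1)) (at 0)"
    by (auto intro!: derivative_eq_intros)
  moreover have "(f has_derivative (\<lambda>h. inner h (P y))) (at ((\<lambda>h. y + h *\<^sub>R axis i 1) 0))"
    using assms by (simp add: gderiv_def)
  ultimately have "((\<lambda>h. f (y + h *\<^sub>R axis i 1)) has_derivative (\<lambda>h. inner (h *\<^sub>R axis i 1) (P y))) (at 0)"
    by (rule has_derivative_compose)
  then
  have "((\<lambda>h. f (y + h *\<^sub>R axis i 1)) has_derivative (\<lambda>h. inner (h *\<^sub>R axis i 1) (P y))) (at 0)"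
    by (simp add: o_def)
  moreover have "(\<lambda>h. inner (h *\<^sub>R axis i 1) (P y)) = (*) (P y $ i)"
    by (auto simp: inner_axis inner_axis' inner_commute)
  ultimately have "((\<lambda>h. f (y + h *\<^sub>R axis i 1)) has_field_derivative (P y $ i)) (at 0)"
    by (simp add: has_field_derivative_def)
  then show ?thesis unfolding dL_dx_def
    by (intro DERIV_imp_deriv) (auto intro!: derivative_eq_intros)
qed
theorem lemma7p1:
  fixes P :: "real^'n \<Rightarrow> real^'n" and f :: "real^'n \<Rightarrow> real"
    and \<nu> \<eta> :: "real \<Rightarrow> real" and \<epsilon> :: real
    and x x' x'' :: "real \<Rightarrow> real^'n"
    and a b :: "real \<Rightarrow> real"
  assumes cont_nu: "continuous_on {0..} \<nu>"
    and cont_eta: "continuous_on {0..} \<eta>"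
    and grad: "\<And>y. GDERIV f y :> P y"
    and a_def: "\<And>t. a t = exp (integral {0..t} \<nu>)"
    and b_def: "\<And>t. b t = a t * \<eta> t"
    and x_deriv: "\<And>t. t > 0 \<Longrightarrow> (x has_vector_derivative x' t) (at t)"
    and x'_deriv: "\<And>t. t > 0 \<Longrightarrow> (x' has_vector_derivative x'' t) (at t)"
    and t_pos: "t > 0"
  shows "x'' t + \<nu> t *\<^sub>R x' t + \<eta> t *\<^sub>R P (x t)
           = \<epsilon> *\<^sub>R vector_derivative (\<lambda>s. \<eta> s *\<^sub>R P (x s)) (at t)
         \<longleftrightarrow>
         forced_EL (\<lambda>y v s. a s * ((1/2) * (norm v)\<^sup>2) - b s * f y)
           (\<lambda>s. (\<epsilon> * a s) *\<^sub>R vector_derivative (\<lambda>r. (b r / a r) *\<^sub>R P (x r)) (at s))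
           x t"
proof -
  let ?L = "\<lambda>y v s. a s * ((1/2) * (norm v)\<^sup>2) - b s * f (y::real^'n)"
  have apos: "\<And>s. a s > 0" using a_def by simp
  have aeq: "a = (\<lambda>s. exp (integral {0..s} \<nu>))" using a_def by (simp add: fun_eq_iff)
  have "((\<lambda>s. integral {0..s} \<nu>) has_real_derivative \<nu> t) (at t within {0..t+1})"
    by (rule integral_has_real_derivative) (use cont_nu t_pos in \<open>auto intro: continuous_on_subset\<close>)
  then have I: "((\<lambda>s. integral {0..s} \<nu>) has_real_derivative \<nu> t) (at t)"
    using t_pos by (simp add: at_within_Icc_at)
  have aD: "(a has_real_derivative a t * \<nu> t) (at t)"
    unfolding aeq by (rule derivative_eq_intros I refl)+
  have ev: "\<forall>\<^sub>F s in nhds t. vector_derivative x (at s) = x' s"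
    using eventually_nhds_in_open[of "{0<..}" t] t_pos
    by (auto elim!: eventually_mono intro: vector_derivative_at x_deriv)
  define V where "V = vector_derivative (\<lambda>s. \<eta> s *\<^sub>R P (x s)) (at t)"
  have Feq: "(\<lambda>r. (b r / a r) *\<^sub>R P (x r)) = (\<lambda>r. \<eta> r *\<^sub>R P (x r))"
    using apos b_def by (simp add: fun_eq_iff) (metis less_irrefl nonzero_mult_div_cancel_left)
  have Di: "((\<lambda>s. dL_dv ?L (x s) (vector_derivative x (at s)) s i) has_real_derivative
      (a t * \<nu> t * x' t $ i + a t * x'' t $ i)) (at t)" for i
  proof -
    have "((\<lambda>s. x' s $ i) has_derivative (\<lambda>h. (h *\<^sub>R x'' t) $ i)) (at t)"
      using bounded_linear.has_derivative[OF bounded_linear_vec_nth x'_deriv[OF t_pos, unfolded has_vector_derivative_def]] .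
    then have "((\<lambda>s. x' s $ i) has_real_derivative x'' t $ i) (at t)"
      by (simp add: has_field_derivative_def) (metis (no_types, lifting) ext mult.commute)
    then have "((\<lambda>s. a s * x' s $ i) has_real_derivative (a t * \<nu> t * x' t $ i + a t * x'' t $ i)) (at t)"
      using aD by (auto intro!: derivative_eq_intros)
    moreover have "\<forall>\<^sub>F s in nhds t. dL_dv ?L (x s) (vector_derivative x (at s)) s i = a s * x' s $ i"
      using ev by (auto elim!: eventually_mono simp only: dLv)
    ultimately show ?thesis by (subst DERIV_cong_ev[OF refl _ refl]) auto
  qed
  have dLx': "\<And>y v s i. dL_dx ?L y v s i = - b s * P y $ i" by (rule dLx[OF grad])
  have Fv: "\<And>i. ((\<lambda>s. (\<epsilon> * a s) *\<^sub>R vector_derivative (\<lambda>r. (b r / a r) *\<^sub>R P (x r)) (at s)) t) $ i = \<epsilon> * a t * V $ i"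
    by (simp add: Feq V_def)
  have "forced_EL ?L (\<lambda>s. (\<epsilon> * a s) *\<^sub>R vector_derivative (\<lambda>r. (b r / a r) *\<^sub>R P (x r)) (at s)) x t
     \<longleftrightarrow> (\<forall>i. a t * \<nu> t * x' t $ i + a t * x'' t $ i = - b t * P (x t) $ i + \<epsilon> * a t * V $ i)"
    unfolding forced_EL_def dLx' Fv
  proof (intro iffI allI)
    fix i assume "\<forall>i. a t * \<nu> t * x' t $ i + a t * x'' t $ i = - b t * P (x t) $ i + \<epsilon> * a t * V $ i"
    then show "((\<lambda>s. dL_dv ?L (x s) (vector_derivative x (at s)) s i) has_real_derivative
      (- b t * P (x t) $ i + \<epsilon> * a t * V $ i)) (at t)"
      using Di[of i] by simp
  next
    fix i assume H: "\<forall>i. ((\<lambda>s. dL_dv ?L (x s) (vector_derivative x (at s)) s i) has_real_derivative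
      (- b t * P (x t) $ i + \<epsilon> * a t * V $ i)) (at t)"
    show "a t * \<nu> t * x' t $ i + a t * x'' t $ i = - b t * P (x t) $ i + \<epsilon> * a t * V $ i"
      using DERIV_unique[OF Di[of i] H[rule_format, of i]] by simp
  qed
  also have "\<dots> \<longleftrightarrow> (\<forall>i. x'' t $ i + \<nu> t * x' t $ i + \<eta> t * P (x t) $ i = \<epsilon> * V $ i)"
  proof -
    have "a t * \<nu> t * x' t $ i + a t * x'' t $ i = - b t * P (x t) $ i + \<epsilon> * a t * V $ i
      \<longleftrightarrow> a t * (x'' t $ i + \<nu> t * x' t $ i + \<eta> t * P (x t) $ i) = a t * (\<epsilon> * V $ i)" for i
      by (auto simp: b_def algebra_simps)
    then show ?thesis using apos[of t] by simp
  qed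
  also have "\<dots> \<longleftrightarrow> x'' t + \<nu> t *\<^sub>R x' t + \<eta> t *\<^sub>R P (x t) = \<epsilon> *\<^sub>R V"
    by (simp add: vec_eq_iff)
  finally show ?thesis unfolding V_def by simp
qed

end
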